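(* Let $m\ge 2$ and $n\ge 2$ be integers. Let $\mathrm{AGL}_{n-1}(\mathbb{Z}_m)\subset GL_n(\mathbb{Z}_m)$ be the group of matrices $g(A,v)=\begin{pmatrix}A&v\\0&1\end{pmatrix}$ with $A\in GL_{n-1}(\mathbb{Z}_m)$ and $v\in\mathbb{Z}_m^{n-1}$ a column vector. Fix a standard basis vector $e_i\in\mathbb{Z}_m^{n-1}$ and let $B=g(I,e_i)$. Then $\mathrm{AGL}_{n-1}(\mathbb{Z}_m)$ is generated by $B$ together with the matrices $g(E_{k,l}(1),0)$ for all $1\le k\neq l\le n-1$ and $g(D(\alpha,1),0)$ for all $\alpha\in\mathbb{Z}_m^\times$.
   Context: For $k\neq l$, $\Delta_{k,l}$ denotes the $(n-1)\times(n-1)$ matrix with $(k,l)$-entry $1$ and all other entries $0$ (and $\Delta_{k,k}$ the matrix with $(k,k)$-entry $1$, others $0$); $E_{k,l}(\alpha)=I+\alpha\Delta_{k,l}$; $D(\alpha,k)=I+(\alpha-1)\Delta_{k,k}$, the diagonal matrix with $(k,k)$-entry $\alpha$ and other diagonal entries $1$. Multiplication in $\mathrm{AGL}_{n-1}(\mathbb{Z}_m)$ is $g(A_1,v_1)g(A_2,v_2)=g(A_1A_2,A_1v_2+v_1)$. *)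

theory Defs
  imports "Jordan_Normal_Form.Matrix" "Berlekamp_Zassenhaus.Finite_Field"
    "HOL-Algebra.Generated_Groups"
begin

text \<open>Z_m is the type 'm mod_ring with m = CARD('m) (class nontriv: m >= 2).
  Matrices are Jordan_Normal_Form matrices, indices are 0-based.
  d = n - 1 is the size of the linear part.\<close>

definition Delta :: "nat \<Rightarrow> nat \<Rightarrow> nat \<Rightarrow> 'a::comm_ring_1 mat" where
  "Delta d k l = mat d d (\<lambda>(i,j). if i = k \<and> j = l then 1 else 0)"

definition Emat :: "nat \<Rightarrow> nat \<Rightarrow> nat \<Rightarrow> 'a::comm_ring_1 \<Rightarrow> 'a mat" where
  "Emat d k l \<alpha> = 1\<^sub>m d + \<alpha> \<cdot>\<^sub>m Delta d k l"

definition Dmat :: "nat \<Rightarrow> 'a::comm_ring_1 \<Rightarrow> nat \<Rightarrow> 'a mat" where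
  "Dmat d \<alpha> k = 1\<^sub>m d + (\<alpha> - 1) \<cdot>\<^sub>m Delta d k k"

definition gAGL :: "'a::comm_ring_1 mat \<Rightarrow> 'a mat \<Rightarrow> 'a mat" where
  "gAGL A v = four_block_mat A v (0\<^sub>m 1 (dim_col A)) (1\<^sub>m 1)"

definition unit_vec_col :: "nat \<Rightarrow> nat \<Rightarrow> 'a::comm_ring_1 mat" where
  "unit_vec_col d i = mat d 1 (\<lambda>(r,c). if r = i then 1 else 0)"

definition AGL_carrier :: "nat \<Rightarrow> 'a::comm_ring_1 mat set" where
  "AGL_carrier d = {gAGL A v | A v. A \<in> carrier_mat d d \<and> invertible_mat A
                                     \<and> v \<in> carrier_mat d 1}"

definition AGL :: "nat \<Rightarrow> 'a::comm_ring_1 mat monoid" where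
  "AGL d = \<lparr>carrier = AGL_carrier d, mult = (*), one = 1\<^sub>m (d + 1)\<rparr>"

end

theory Submission
  imports Defs
begin

lemma Delta_dims[simp]: "dim_row (Delta d k l) = d" "dim_col (Delta d k l) = d" by (simp_all add: Delta_def)
lemma Delta_carrier[simp]: "Delta d k l \<in> carrier_mat d d" by (simp add: Delta_def)
lemma Delta_index[simp]: "i < d \<Longrightarrow> j < d \<Longrightarrow> Delta d k l $$ (i,j) = (if i = k \<and> j = l then 1 else 0)"
  by (simp add: Delta_def)
lemma Emat_carrier[simp]: "Emat d k l c \<in> carrier_mat d d" by (simp add: Emat_def)
lemma Emat_dims[simp]: "dim_row (Emat d k l c) = d" "dim_col (Emat d k l c) = d" by (simp_all add: Emat_def)
lemma Emat_index: "i < d \<Longrightarrow> j < d \<Longrightarrow> Emat d k l c $$ (i,j) = (if i = j then 1 else 0) + (if i = k \<and> j = l then c else 0)"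
  unfolding Emat_def by simp
lemma Dmat_carrier[simp]: "Dmat d c k \<in> carrier_mat d d" by (simp add: Dmat_def)
lemma Dmat_dims[simp]: "dim_row (Dmat d c k) = d" "dim_col (Dmat d c k) = d" by (simp_all add: Dmat_def)
lemma Dmat_index: "i < d \<Longrightarrow> j < d \<Longrightarrow> Dmat d c k $$ (i,j) = (if i = j then 1 else 0) + (if i = k \<and> j = k then c - 1 else 0)"
  unfolding Dmat_def by simp

lemma Emat_mult_index:
  assumes "C \<in> carrier_mat d nc" "k < d" "l < d" "i < d" "j < nc"
  shows "(Emat d k l c * C) $$ (i,j) = C $$ (i,j) + (if i = k then c * C $$ (l,j) else 0)"
proof -
  have "(Emat d k l c * C) $$ (i,j) = (\<Sum>t\<in>{0..<d}. Emat d k l c $$ (i,t) * C $$ (t,j))"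
    using assms by (simp add: scalar_prod_def)
  also have "\<dots> = (\<Sum>t\<in>{0..<d}. (if i = t then C $$ (t,j) else 0) + (if i = k \<and> t = l then c * C $$ (t,j) else 0))"
    using assms by (intro sum.cong) (auto simp: Emat_index algebra_simps)
  also have "\<dots> = C $$ (i,j) + (if i = k then c * C $$ (l,j) else 0)"
    using assms by (simp add: sum.distrib)
  finally show ?thesis .
qed

lemma Emat_add:
  assumes "k < d" "l < d" "k \<noteq> l"
  shows "Emat d k l a * Emat d k l b = Emat d k l (a + b)"
  by (rule eq_matI) (use assms in \<open>auto simp del: index_mult_mat(1) simp add: Emat_mult_index[OF Emat_carrier] Emat_index algebra_simps\<close>)

lemma Emat_zero: "Emat d k l 0 = 1\<^sub>m d"
  by (rule eq_matI) (auto simp: Emat_index)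

lemma gAGL_carrier: "A \<in> carrier_mat d d \<Longrightarrow> v \<in> carrier_mat d 1 \<Longrightarrow> gAGL A v \<in> carrier_mat (d+1) (d+1)"
  unfolding gAGL_def by (rule four_block_carrier_mat) auto

lemma gAGL_mult:
  assumes "A \<in> carrier_mat d d" "v \<in> carrier_mat d 1" "B \<in> carrier_mat d d" "w \<in> carrier_mat d 1"
  shows "gAGL A v * gAGL B w = gAGL (A * B) (A * w + v)"
proof -
  have e: "dim_col A = d" "dim_col B = d" "dim_col (A*B) = d" using assms by auto
  have "four_block_mat A v (0\<^sub>m 1 d) (1\<^sub>m 1) * four_block_mat B w (0\<^sub>m 1 d) (1\<^sub>m 1)
    = four_block_mat (A * B + v * 0\<^sub>m 1 d) (A * w + v * 1\<^sub>m 1)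
       (0\<^sub>m 1 d * B + 1\<^sub>m 1 * 0\<^sub>m 1 d) (0\<^sub>m 1 d * w + 1\<^sub>m 1 * 1\<^sub>m 1)"
    by (rule mult_four_block_mat) (use assms in auto)
  also have "\<dots> = four_block_mat (A * B) (A * w + v) (0\<^sub>m 1 d) (1\<^sub>m 1)"
    using assms by simp
  finally show ?thesis unfolding gAGL_def e .
qed

lemma gAGL_one: "gAGL (1\<^sub>m d) (0\<^sub>m d 1) = 1\<^sub>m (d+1)"
  unfolding gAGL_def by simp

lemma invertible_matD:
  assumes "invertible_mat A" "A \<in> carrier_mat d d"
  obtains B where "B \<in> carrier_mat d d" "A * B = 1\<^sub>m d" "B * A = 1\<^sub>m d"
proof -
  from assms obtain B where B: "A * B = 1\<^sub>m (dim_row A)" "B * A = 1\<^sub>m (dim_row B)"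
    unfolding invertible_mat_def inverts_mat_def by blast
  have "dim_col B = d" using arg_cong[OF B(1), of dim_col] assms by simp
  moreover have "dim_row B = d" using arg_cong[OF B(2), of dim_col] assms by simp
  ultimately have "B \<in> carrier_mat d d" by (intro carrier_matI)
  then show ?thesis using that[of B] B assms by auto
qed

lemma invertible_matI:
  assumes "A \<in> carrier_mat d d" "B \<in> carrier_mat d d" "A * B = 1\<^sub>m d" "B * A = 1\<^sub>m d"
  shows "invertible_mat A"
  using assms unfolding invertible_mat_def inverts_mat_def square_mat.simps by auto

lemma inv_prod:
  fixes A B A' B' :: "'a::comm_ring_1 mat"
  assumes "A \<in> carrier_mat d d" "B \<in> carrier_mat d d" "A' \<in> carrier_mat d d" "B' \<in> carrier_mat d d"
    "A * A' = 1\<^sub>m d" "B * B' = 1\<^sub>m d"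
  shows "(A * B) * (B' * A') = 1\<^sub>m d"
proof -
  have e1: "(A*B)*(B'*A') = A*(B*(B'*A'))" using assms by (intro assoc_mult_mat[of _ d d _ d _ d]) auto
  have e2: "B*(B'*A') = (B*B')*A'" using assms by (intro assoc_mult_mat[symmetric, of _ d d _ d _ d]) auto
  show ?thesis unfolding e1 e2 assms(6) left_mult_one_mat[OF assms(3)] assms(5) ..
qed

lemma AGL_group: "group (AGL d :: 'a::comm_ring_1 mat monoid)"
proof (rule groupI)
  have C: "carrier (AGL d :: 'a mat monoid) = AGL_carrier d" by (simp add: AGL_def)
  have sub: "x \<in> carrier_mat (d+1) (d+1)" if "x \<in> carrier (AGL d :: 'a mat monoid)" for x
    using that gAGL_carrier unfolding C AGL_carrier_def by blast
  show "x \<otimes>\<^bsub>AGL d\<^esub> y \<in> carrier (AGL d)" if xy: "x \<in> carrier (AGL d)" "y \<in> carrier (AGL d)" for x y :: "'a mat"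
  proof -
    obtain A v where x: "x = gAGL A v" "A \<in> carrier_mat d d" "invertible_mat A" "v \<in> carrier_mat d 1"
      using xy(1) unfolding C AGL_carrier_def by blast
    obtain B w where y: "y = gAGL B w" "B \<in> carrier_mat d d" "invertible_mat B" "w \<in> carrier_mat d 1"
      using xy(2) unfolding C AGL_carrier_def by blast
    obtain A' where A': "A' \<in> carrier_mat d d" "A * A' = 1\<^sub>m d" "A' * A = 1\<^sub>m d" using invertible_matD[OF x(3,2)] .
    obtain B' where B': "B' \<in> carrier_mat d d" "B * B' = 1\<^sub>m d" "B' * B = 1\<^sub>m d" using invertible_matD[OF y(3,2)] .
    have 1: "(A * B) * (B' * A') = 1\<^sub>m d" by (rule inv_prod) (use x y A' B' in auto)
    have 2: "(B' * A') * (A * B) = 1\<^sub>m d" by (rule inv_prod) (use x y A' B' in auto)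
    have "invertible_mat (A * B)" by (rule invertible_matI[OF _ _ 1 2]) (use x y A' B' in auto)
    moreover have "x * y = gAGL (A * B) (A * w + v)" using x y gAGL_mult by blast
    moreover have "A * B \<in> carrier_mat d d" "A * w + v \<in> carrier_mat d 1" using x y by auto
    ultimately have "x * y \<in> AGL_carrier d" unfolding AGL_carrier_def by blast
    then show ?thesis unfolding C by (simp add: AGL_def)
  qed
  show "\<one>\<^bsub>AGL d\<^esub> \<in> carrier (AGL d :: 'a mat monoid)"
  proof -
    have "invertible_mat (1\<^sub>m d :: 'a mat)" by (rule invertible_matI[of _ d "1\<^sub>m d"]) auto
    moreover have "(1\<^sub>m d :: 'a mat) \<in> carrier_mat d d" "(0\<^sub>m d 1 :: 'a mat) \<in> carrier_mat d 1" by auto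
    ultimately have "gAGL (1\<^sub>m d) (0\<^sub>m d 1) \<in> (AGL_carrier d :: 'a mat set)" unfolding AGL_carrier_def by blast
    then show ?thesis unfolding gAGL_one C by (simp add: AGL_def)
  qed
  show "x \<otimes>\<^bsub>AGL d\<^esub> y \<otimes>\<^bsub>AGL d\<^esub> z = x \<otimes>\<^bsub>AGL d\<^esub> (y \<otimes>\<^bsub>AGL d\<^esub> z)"
    if "x \<in> carrier (AGL d)" "y \<in> carrier (AGL d)" "z \<in> carrier (AGL d)" for x y z :: "'a mat"
    using sub[OF that(1)] sub[OF that(2)] sub[OF that(3)] by (simp add: AGL_def)
  show "\<one>\<^bsub>AGL d\<^esub> \<otimes>\<^bsub>AGL d\<^esub> x = x" if "x \<in> carrier (AGL d)" for x :: "'a mat"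
    using sub[OF that] by (simp add: AGL_def)
  show "\<exists>y\<in>carrier (AGL d). y \<otimes>\<^bsub>AGL d\<^esub> x = \<one>\<^bsub>AGL d\<^esub>" if x0: "x \<in> carrier (AGL d)" for x :: "'a mat"
  proof -
    obtain A v where x: "x = gAGL A v" "A \<in> carrier_mat d d" "invertible_mat A" "v \<in> carrier_mat d 1"
      using x0 unfolding C AGL_carrier_def by blast
    obtain A' where A': "A' \<in> carrier_mat d d" "A * A' = 1\<^sub>m d" "A' * A = 1\<^sub>m d" using invertible_matD[OF x(3,2)] .
    have iA': "invertible_mat A'" by (rule invertible_matI[OF A'(1) x(2) A'(3) A'(2)])
    have Av: "A' * v \<in> carrier_mat d 1" using A' x by auto
    have vv: "A' * v + - (A' * v) = 0\<^sub>m d 1"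
      using Av by (subst comm_add_mat[of _ d 1]) auto
    have "gAGL A' (- (A' * v)) * x = gAGL (A' * A) (A' * v + - (A' * v))"
      unfolding x(1) by (rule gAGL_mult) (use x A' Av in auto)
    also have "\<dots> = 1\<^sub>m (d+1)" using A'(3) vv gAGL_one by simp
    finally have e: "gAGL A' (- (A' * v)) * x = 1\<^sub>m (d+1)" .
    have "- (A' * v) \<in> carrier_mat d 1" using Av by auto
    then have "gAGL A' (- (A' * v)) \<in> AGL_carrier d" using A'(1) iA' unfolding AGL_carrier_def by blast
    then show ?thesis using e unfolding C by (auto simp: AGL_def)
  qed
qed

definition gens :: "nat \<Rightarrow> nat \<Rightarrow> 'a::comm_ring_1 mat set" where
  "gens d i = {gAGL (1\<^sub>m d) (unit_vec_col d i)}
            \<union> {gAGL (Emat d k l 1) (0\<^sub>m d 1) | k l. k < d \<and> l < d \<and> k \<noteq> l}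
            \<union> {gAGL (Dmat d \<alpha> 0) (0\<^sub>m d 1) | \<alpha>. \<alpha> dvd 1}"

definition LL :: "nat \<Rightarrow> nat \<Rightarrow> 'a::comm_ring_1 mat \<Rightarrow> bool" where
  "LL d i A \<longleftrightarrow> A \<in> carrier_mat d d \<and> gAGL A (0\<^sub>m d 1) \<in> generate (AGL d) (gens d i)"

lemma LL_mult:
  assumes "LL d i A" "LL d i B"
  shows "LL d i (A * B)"
proof -
  have A: "A \<in> carrier_mat d d" and B: "B \<in> carrier_mat d d" using assms by (auto simp: LL_def)
  have "gAGL A (0\<^sub>m d 1) * gAGL B (0\<^sub>m d 1) = gAGL (A * B) (A * 0\<^sub>m d 1 + 0\<^sub>m d 1)"
    by (rule gAGL_mult) (use A B in auto)
  also have "A * 0\<^sub>m d 1 + 0\<^sub>m d 1 = 0\<^sub>m d 1" using A by simp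
  finally have e: "gAGL A (0\<^sub>m d 1) * gAGL B (0\<^sub>m d 1) = gAGL (A * B) (0\<^sub>m d 1)" .
  have "gAGL A (0\<^sub>m d 1) \<otimes>\<^bsub>AGL d\<^esub> gAGL B (0\<^sub>m d 1) \<in> generate (AGL d) (gens d i)"
    using assms unfolding LL_def by (intro generate.eng) auto
  then show ?thesis using e A B unfolding LL_def by (simp add: AGL_def)
qed

lemma LL_one: "LL d i (1\<^sub>m d :: 'a::comm_ring_1 mat)"
proof -
  have "\<one>\<^bsub>AGL d\<^esub> \<in> generate (AGL d) (gens d i :: 'a mat set)" by (rule generate.one)
  then show ?thesis unfolding LL_def gAGL_one by (simp add: AGL_def)
qed

lemma LL_E1: "k < d \<Longrightarrow> l < d \<Longrightarrow> k \<noteq> l \<Longrightarrow> LL d i (Emat d k l 1 :: 'a::comm_ring_1 mat)"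
  unfolding LL_def by (auto intro!: generate.incl simp: gens_def)

lemma LL_D: "(\<alpha>::'a::comm_ring_1) dvd 1 \<Longrightarrow> LL d i (Dmat d \<alpha> 0)"
  unfolding LL_def by (auto intro!: generate.incl simp: gens_def)

lemma LL_Enat:
  assumes "k < d" "l < d" "k \<noteq> l"
  shows "LL d i (Emat d k l (of_nat N) :: 'a::comm_ring_1 mat)"
proof (induction N)
  case 0 then show ?case using LL_one by (simp add: Emat_zero)
next
  case (Suc N)
  have "Emat d k l 1 * Emat d k l (of_nat N) = (Emat d k l (of_nat (Suc N)) :: 'a mat)"
    using assms by (simp add: Emat_add add.commute)
  then show ?case using LL_mult[OF LL_E1[OF assms] Suc] by simp
qed

lemma mod_ring_of_nat: "(c :: 'm::nontriv mod_ring) = of_nat (nat (to_int_mod_ring c))"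
proof -
  have "to_int_mod_ring c \<in> range (to_int_mod_ring :: 'm mod_ring \<Rightarrow> int)" by simp
  then have "0 \<le> to_int_mod_ring c" unfolding range_to_int_mod_ring by simp
  then have "(of_nat (nat (to_int_mod_ring c)) :: 'm mod_ring) = of_int (to_int_mod_ring c)"
    by simp
  also have "\<dots> = c" by (simp add: of_int_of_int_mod_ring)
  finally show ?thesis by simp
qed

lemma LL_E:
  assumes "k < d" "l < d" "k \<noteq> l"
  shows "LL d i (Emat d k l c :: 'm::nontriv mod_ring mat)"
  by (subst mod_ring_of_nat[of c]) (rule LL_Enat[OF assms])

lemma LL_back:
  assumes "k < d" "l < d" "k \<noteq> l" "C \<in> carrier_mat d d" "LL d i (Emat d k l c * C)"
  shows "LL d i (C :: 'm::nontriv mod_ring mat)"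
proof -
  have "Emat d k l (-c) * (Emat d k l c * C) = (Emat d k l (-c) * Emat d k l c) * C"
    using assms by (intro assoc_mult_mat[symmetric, of _ d d _ d _ d]) auto
  also have "\<dots> = C" using assms by (simp add: Emat_add Emat_zero)
  finally show ?thesis using LL_mult[OF LL_E[OF assms(1-3), of i "-c"] assms(5)] by simp
qed

definition idc :: "nat \<Rightarrow> nat \<Rightarrow> 'a::comm_ring_1 mat \<Rightarrow> bool" where
  "idc d t C \<longleftrightarrow> (\<forall>r<d. \<forall>j<d. t < j \<longrightarrow> C $$ (r,j) = (if r = j then 1 else 0))"

definition linv :: "nat \<Rightarrow> 'a::comm_ring_1 mat \<Rightarrow> bool" where
  "linv d C \<longleftrightarrow> (\<exists>B\<in>carrier_mat d d. B * C = 1\<^sub>m d)"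

lemma idc_step:
  assumes "k < d" "l \<le> t" "l < d" "C \<in> carrier_mat d d" "idc d t C"
  shows "idc d t (Emat d k l c * C)"
  using assms unfolding idc_def by (auto simp del: index_mult_mat(1) simp: Emat_mult_index)

lemma linv_step:
  assumes "k < d" "l < d" "k \<noteq> l" "C \<in> carrier_mat d d" "linv d C"
  shows "linv d (Emat d k l c * C)"
proof -
  obtain B where B: "B \<in> carrier_mat d d" "B * C = 1\<^sub>m d" using assms(5) unfolding linv_def by blast
  have "(B * Emat d k l (-c)) * (Emat d k l c * C) = B * ((Emat d k l (-c) * Emat d k l c) * C)"
  proof -
    have "(B * Emat d k l (-c)) * (Emat d k l c * C) = B * (Emat d k l (-c) * (Emat d k l c * C))"
      using B assms by (intro assoc_mult_mat[of _ d d _ d _ d]) auto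
    also have "Emat d k l (-c) * (Emat d k l c * C) = (Emat d k l (-c) * Emat d k l c) * C"
      using B assms by (intro assoc_mult_mat[symmetric, of _ d d _ d _ d]) auto
    finally show ?thesis .
  qed
  also have "\<dots> = 1\<^sub>m d" using assms B by (simp add: Emat_add Emat_zero)
  finally show ?thesis unfolding linv_def using B by (intro bexI[of _ "B * Emat d k l (-c)"]) auto
qed

lemma unimodular:
  assumes "t < d" "C \<in> carrier_mat d d" "linv d C" "idc d t C"
  shows "\<exists>b. (\<Sum>r\<in>{0..t}. b r * C $$ (r,t)) = 1"
proof -
  obtain B where B: "B \<in> carrier_mat d d" "B * C = 1\<^sub>m d" using assms(3) unfolding linv_def by blast
  have ent: "(\<Sum>r\<in>{0..<d}. B $$ (t,r) * C $$ (r,j)) = (if t = j then 1 else 0)" if "j < d" for j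
  proof -
    have "(B * C) $$ (t,j) = (\<Sum>r\<in>{0..<d}. B $$ (t,r) * C $$ (r,j))"
      using B(1) assms(1,2) that by (simp add: scalar_prod_def)
    moreover have "(B * C) $$ (t,j) = (if t = j then 1 else 0)" using B(2) assms(1) that by simp
    ultimately show ?thesis by simp
  qed
  have z: "B $$ (t,j) = 0" if "t < j" "j < d" for j
  proof -
    have "(\<Sum>r\<in>{0..<d}. B $$ (t,r) * C $$ (r,j)) = (\<Sum>r\<in>{0..<d}. if r = j then B $$ (t,r) else 0)"
      using assms(4) that unfolding idc_def by (intro sum.cong) auto
    then show ?thesis using ent[OF that(2)] that by simp
  qed
  have "(\<Sum>r\<in>{0..<d}. B $$ (t,r) * C $$ (r,t)) = (\<Sum>r\<in>{0..t}. B $$ (t,r) * C $$ (r,t))"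
    using assms(1) z by (intro sum.mono_neutral_right) auto
  then show ?thesis using ent[OF assms(1)] by auto
qed

lemma to_int_bounds: "0 \<le> to_int_mod_ring (x :: 'm::nontriv mod_ring)" "to_int_mod_ring x < int CARD('m)"
proof -
  have "to_int_mod_ring x \<in> range (to_int_mod_ring :: 'm mod_ring \<Rightarrow> int)" by simp
  then show "0 \<le> to_int_mod_ring x" "to_int_mod_ring x < int CARD('m)" unfolding range_to_int_mod_ring by auto
qed

lemma to_int_sub:
  assumes "to_int_mod_ring y \<le> to_int_mod_ring (x :: 'm::nontriv mod_ring)"
  shows "to_int_mod_ring (x - y) = to_int_mod_ring x - to_int_mod_ring y"
proof -
  have "x - y = of_int (to_int_mod_ring x) - of_int (to_int_mod_ring y)"
    by (simp add: of_int_of_int_mod_ring)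
  also have "\<dots> = of_int_mod_ring (to_int_mod_ring x - to_int_mod_ring y)"
    by (simp add: of_int_of_int_mod_ring[symmetric])
  finally have e: "x - y = of_int_mod_ring (to_int_mod_ring x - to_int_mod_ring y)" .
  show ?thesis unfolding e
    using assms to_int_bounds[of x] to_int_bounds[of y] by (intro to_int_mod_ring_of_int_mod_ring) auto
qed

lemma euclid:
  fixes C :: "'m::nontriv mod_ring mat"
  assumes "t < d"
    and hyp: "\<And>(C' :: 'm mod_ring mat) j w. C' \<in> carrier_mat d d \<Longrightarrow> linv d C' \<Longrightarrow> idc d t C' \<Longrightarrow> j \<le> t
               \<Longrightarrow> C' $$ (j,t) * w = 1 \<Longrightarrow> LL d i C'"
  shows "C \<in> carrier_mat d d \<Longrightarrow> linv d C \<Longrightarrow> idc d t C \<Longrightarrow> LL d i C"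
proof (induction "\<Sum>r\<in>{0..t}. nat (to_int_mod_ring (C $$ (r,t)))" arbitrary: C rule: less_induct)
  case (less C)
  show ?case
  proof (cases "\<exists>j k. j \<le> t \<and> k \<le> t \<and> j \<noteq> k \<and> C $$ (j,t) \<noteq> 0 \<and> C $$ (k,t) \<noteq> 0
                  \<and> to_int_mod_ring (C $$ (k,t)) \<le> to_int_mod_ring (C $$ (j,t))")
    case True
    then obtain j k where jk: "j \<le> t" "k \<le> t" "j \<noteq> k" "C $$ (j,t) \<noteq> 0" "C $$ (k,t) \<noteq> 0"
      "to_int_mod_ring (C $$ (k,t)) \<le> to_int_mod_ring (C $$ (j,t))" by blast
    define C1 where "C1 = Emat d j k (-1) * C"
    have jd: "j < d" "k < d" using jk assms(1) by auto
    have C1c: "C1 \<in> carrier_mat d d" unfolding C1_def using less by auto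
    have C1l: "linv d C1" unfolding C1_def by (rule linv_step) (use jd jk less in auto)
    have C1i: "idc d t C1" unfolding C1_def by (rule idc_step) (use jd jk less in auto)
    have ent: "C1 $$ (r,t) = C $$ (r,t) + (if r = j then - C $$ (k,t) else 0)" if "r \<le> t" for r
      unfolding C1_def using that less jd assms(1) by (subst Emat_mult_index) auto
    have lt: "(\<Sum>r\<in>{0..t}. nat (to_int_mod_ring (C1 $$ (r,t)))) < (\<Sum>r\<in>{0..t}. nat (to_int_mod_ring (C $$ (r,t))))"
    proof (rule sum_strict_mono_ex1)
      have "to_int_mod_ring (C1 $$ (j,t)) = to_int_mod_ring (C $$ (j,t)) - to_int_mod_ring (C $$ (k,t))"
        using ent[OF jk(1)] to_int_sub[OF jk(6)] by simp
      moreover have "0 < to_int_mod_ring (C $$ (k,t))" using jk(5) to_int_bounds[of "C $$ (k,t)"]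
        by (metis order_le_less to_int_mod_ring_hom.hom_0_iff)
      ultimately show "\<exists>a\<in>{0..t}. nat (to_int_mod_ring (C1 $$ (a,t))) < nat (to_int_mod_ring (C $$ (a,t)))"
        using jk(1) to_int_bounds[of "C1 $$ (j,t)"] by (intro bexI[of _ j]) auto
      show "\<forall>x\<in>{0..t}. nat (to_int_mod_ring (C1 $$ (x,t))) \<le> nat (to_int_mod_ring (C $$ (x,t)))"
      proof
        fix x assume "x \<in> {0..t}"
        then show "nat (to_int_mod_ring (C1 $$ (x,t))) \<le> nat (to_int_mod_ring (C $$ (x,t)))"
          using ent[of x] \<open>to_int_mod_ring (C1 $$ (j,t)) = _\<close> to_int_bounds[of "C $$ (k,t)"]
          by (cases "x = j") auto
      qed
    qed simp
    have "LL d i C1" by (rule less(1)[OF lt C1c C1l C1i])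
    then show ?thesis using jd jk less unfolding C1_def by (intro LL_back[of j d k C i "-1"]) auto
  next
    case False
    obtain b where b: "(\<Sum>r\<in>{0..t}. b r * C $$ (r,t)) = 1" using unimodular[OF assms(1) less(2-4)] by blast
    have "\<exists>j\<in>{0..t}. C $$ (j,t) \<noteq> 0"
    proof (rule ccontr)
      assume "\<not> ?thesis"
      then have "(\<Sum>r\<in>{0..t}. b r * C $$ (r,t)) = 0" by simp
      then show False using b by simp
    qed
    then obtain j where j: "j \<le> t" "C $$ (j,t) \<noteq> 0" by auto
    have others: "C $$ (r,t) = 0" if "r \<le> t" "r \<noteq> j" for r
    proof (rule ccontr)
      assume "C $$ (r,t) \<noteq> 0"
      moreover have "to_int_mod_ring (C $$ (r,t)) \<le> to_int_mod_ring (C $$ (j,t))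
         \<or> to_int_mod_ring (C $$ (j,t)) \<le> to_int_mod_ring (C $$ (r,t))" by linarith
      ultimately show False using False j that by blast
    qed
    have "(\<Sum>r\<in>{0..t}. b r * C $$ (r,t)) = (\<Sum>r\<in>{0..t}. if r = j then b j * C $$ (j,t) else 0)"
      using others by (intro sum.cong) auto
    also have "\<dots> = b j * C $$ (j,t)" using j by simp
    finally have "C $$ (j,t) * b j = 1" using b by (simp add: mult.commute)
    then show ?thesis using hyp[OF less(2-4) j(1)] by blast
  qed
qed

lemma clear:
  fixes C :: "'m::nontriv mod_ring mat"
  assumes "t < d" "u * w = 1"
    and hyp: "\<And>C' :: 'm mod_ring mat. C' \<in> carrier_mat d d \<Longrightarrow> linv d C' \<Longrightarrow> idc d t C'
              \<Longrightarrow> (\<forall>r<d. C' $$ (r,t) = (if r = t then u else 0)) \<Longrightarrow> LL d i C'"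
  shows "C \<in> carrier_mat d d \<Longrightarrow> linv d C \<Longrightarrow> idc d t C \<Longrightarrow> C $$ (t,t) = u \<Longrightarrow> LL d i C"
proof (induction "card {r\<in>{0..<d}. r \<noteq> t \<and> C $$ (r,t) \<noteq> 0}" arbitrary: C rule: less_induct)
  case (less C)
  show ?case
  proof (cases "\<exists>r<d. r \<noteq> t \<and> C $$ (r,t) \<noteq> 0")
    case False
    then show ?thesis using less(2-5) by (intro hyp) auto
  next
    case True
    then obtain r where r: "r < d" "r \<noteq> t" "C $$ (r,t) \<noteq> 0" by blast
    define C1 where "C1 = Emat d r t (- (C $$ (r,t) * w)) * C"
    have C1c: "C1 \<in> carrier_mat d d" unfolding C1_def using less by auto
    have C1l: "linv d C1" unfolding C1_def by (rule linv_step) (use r assms(1) less in auto)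
    have C1i: "idc d t C1" unfolding C1_def by (rule idc_step) (use r assms(1) less in auto)
    have ent: "C1 $$ (x,t) = C $$ (x,t) + (if x = r then - (C $$ (r,t) * w) * C $$ (t,t) else 0)" if "x < d" for x
      unfolding C1_def using that less r assms(1) by (subst Emat_mult_index) auto
    have C1t: "C1 $$ (t,t) = u" using ent[OF assms(1)] r less(5) by simp
    have "C $$ (r,t) + - (C $$ (r,t) * w) * u = C $$ (r,t) - C $$ (r,t) * (u * w)"
      by (simp add: algebra_simps)
    then have C1r: "C1 $$ (r,t) = 0" using ent[OF r(1)] less(5) assms(2) by simp
    let ?S1 = "{x\<in>{0..<d}. x \<noteq> t \<and> C1 $$ (x,t) \<noteq> 0}"
    let ?S = "{x\<in>{0..<d}. x \<noteq> t \<and> C $$ (x,t) \<noteq> 0}"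
    have s1: "?S1 \<subseteq> ?S"
    proof
      fix x assume x: "x \<in> ?S1"
      show "x \<in> ?S"
      proof (cases "x = r")
        case True then show ?thesis using x r by simp
      next
        case False then show ?thesis using x ent[of x] by simp
      qed
    qed
    have s2: "r \<in> ?S" "r \<notin> ?S1" using r C1r by auto
    have sub: "?S1 \<subset> ?S" using s1 s2 by blast
    have "LL d i C1" by (rule less(1)[OF psubset_card_mono[OF _ sub] C1c C1l C1i C1t]) simp
    then show ?thesis using r less assms(1) unfolding C1_def by (intro LL_back[of r d t C i "- (C $$ (r,t) * w)"]) auto
  qed
qed

lemma norm:
  fixes C :: "'m::nontriv mod_ring mat"
  assumes "0 < t" "t < d" "C \<in> carrier_mat d d" "linv d C" "idc d t C" "j \<le> t" "C $$ (j,t) * w = 1"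
    and hyp: "\<And>C' :: 'm mod_ring mat. C' \<in> carrier_mat d d \<Longrightarrow> linv d C' \<Longrightarrow> idc d t C'
              \<Longrightarrow> C' $$ (t,t) = 1 \<Longrightarrow> LL d i C'"
  shows "LL d i C"
proof -
  have case1: "LL d i C0" if C0: "C0 \<in> carrier_mat d d" "linv d C0" "idc d t C0" "j0 \<le> t" "j0 \<noteq> t"
    "C0 $$ (j0,t) * w0 = 1" for C0 :: "'m mod_ring mat" and j0 w0
  proof -
    define C1 where "C1 = Emat d t j0 ((1 - C0 $$ (t,t)) * w0) * C0"
    have jd: "j0 < d" using C0 assms(2) by auto
    have C1c: "C1 \<in> carrier_mat d d" unfolding C1_def using C0 by auto
    have C1l: "linv d C1" unfolding C1_def by (rule linv_step) (use jd C0 assms(2) in auto)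
    have C1i: "idc d t C1" unfolding C1_def by (rule idc_step) (use jd C0 assms(2) in auto)
    have "C1 $$ (t,t) = C0 $$ (t,t) + (1 - C0 $$ (t,t)) * w0 * C0 $$ (j0,t)"
      unfolding C1_def using C0 jd assms(2) by (subst Emat_mult_index) auto
    also have "\<dots> = C0 $$ (t,t) + (1 - C0 $$ (t,t)) * (C0 $$ (j0,t) * w0)" by (simp add: algebra_simps)
    also have "\<dots> = 1" using C0(6) by simp
    finally have "LL d i C1" using hyp[OF C1c C1l C1i] by simp
    then show ?thesis using C0 jd assms(2) unfolding C1_def by (intro LL_back[of t d j0 C0 i]) auto
  qed
  show ?thesis
  proof (cases "j = t")
    case False
    then show ?thesis using case1[OF assms(3-6) False assms(7)] by simp
  next
    case True
    define C2 where "C2 = Emat d 0 t ((1 - C $$ (0,t)) * w) * C"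
    have C2c: "C2 \<in> carrier_mat d d" unfolding C2_def using assms by auto
    have C2l: "linv d C2" unfolding C2_def by (rule linv_step) (use assms in auto)
    have C2i: "idc d t C2" unfolding C2_def by (rule idc_step) (use assms in auto)
    have "C2 $$ (0,t) = C $$ (0,t) + (1 - C $$ (0,t)) * w * C $$ (t,t)"
      unfolding C2_def using assms by (subst Emat_mult_index) auto
    also have "\<dots> = C $$ (0,t) + (1 - C $$ (0,t)) * (C $$ (t,t) * w)" by (simp add: algebra_simps)
    also have "\<dots> = 1" using assms(7) True by simp
    finally have "C2 $$ (0,t) * 1 = 1" by simp
    then have "LL d i C2" using case1[OF C2c C2l C2i, of 0 1] assms(1) by simp
    then show ?thesis using assms unfolding C2_def by (intro LL_back[of 0 d t C i]) auto
  qed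
qed

lemma Dmat_eq:
  assumes "C \<in> carrier_mat d d" "idc d 0 C" "\<forall>r<d. C $$ (r,0) = (if r = 0 then u else 0)"
  shows "C = Dmat d u 0"
proof (rule eq_matI)
  fix r j assume rj: "r < dim_row (Dmat d u 0)" "j < dim_col (Dmat d u 0)"
  then have rj': "r < d" "j < d" using Dmat_carrier[of d u 0] by auto
  show "C $$ (r,j) = Dmat d u 0 $$ (r,j)"
  proof (cases "j = 0")
    case True then show ?thesis using assms(3) rj' by (simp add: Dmat_index)
  next
    case False then show ?thesis using assms(2) rj' unfolding idc_def by (simp add: Dmat_index)
  qed
qed (use assms Dmat_carrier[of d u 0] in auto)

lemma Q:
  assumes "t < d"
  shows "\<forall>C :: 'm::nontriv mod_ring mat. C \<in> carrier_mat d d \<and> linv d C \<and> idc d t C \<longrightarrow> LL d i C"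
  using assms
proof (induction t)
  case 0
  show ?case
  proof (intro allI impI)
    fix C :: "'m mod_ring mat" assume C: "C \<in> carrier_mat d d \<and> linv d C \<and> idc d 0 C"
    show "LL d i C"
    proof (rule euclid[OF 0])
      fix C' :: "'m mod_ring mat" and j w
      assume C': "C' \<in> carrier_mat d d" "linv d C'" "idc d 0 C'" "j \<le> 0" "C' $$ (j,0) * w = 1"
      have "C' $$ (0,0) * w = 1" using C' by simp
      show "LL d i C'"
      proof (rule clear[OF 0 \<open>C' $$ (0,0) * w = 1\<close> _ C'(1-3) refl])
        fix C'' :: "'m mod_ring mat"
        assume C'': "C'' \<in> carrier_mat d d" "linv d C''" "idc d 0 C''"
          "\<forall>r<d. C'' $$ (r,0) = (if r = 0 then C' $$ (0,0) else 0)"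
        have "C'' = Dmat d (C' $$ (0,0)) 0" by (rule Dmat_eq) (use C'' in auto)
        moreover have "C' $$ (0,0) dvd 1" using \<open>C' $$ (0,0) * w = 1\<close> by (metis dvd_triv_left)
        ultimately show "LL d i C''" using LL_D by simp
      qed
    qed (use C in auto)
  qed
next
  case (Suc t)
  have IH: "\<forall>C :: 'm mod_ring mat. C \<in> carrier_mat d d \<and> linv d C \<and> idc d t C \<longrightarrow> LL d i C"
    using Suc by simp
  show ?case
  proof (intro allI impI)
    fix C :: "'m mod_ring mat" assume C: "C \<in> carrier_mat d d \<and> linv d C \<and> idc d (Suc t) C"
    show "LL d i C"
    proof (rule euclid[OF Suc(2)])
      fix C' :: "'m mod_ring mat" and j w
      assume C': "C' \<in> carrier_mat d d" "linv d C'" "idc d (Suc t) C'" "j \<le> Suc t" "C' $$ (j,Suc t) * w = 1"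
      show "LL d i C'"
      proof (rule norm[OF _ Suc(2) C'])
        fix C'' :: "'m mod_ring mat"
        assume C'': "C'' \<in> carrier_mat d d" "linv d C''" "idc d (Suc t) C''" "C'' $$ (Suc t, Suc t) = 1"
        show "LL d i C''"
        proof (rule clear[OF Suc(2) _ _ C''(1-4)])
          show "(1::'m mod_ring) * 1 = 1" by simp
          fix D :: "'m mod_ring mat"
          assume D: "D \<in> carrier_mat d d" "linv d D" "idc d (Suc t) D"
            "\<forall>r<d. D $$ (r,Suc t) = (if r = Suc t then 1 else 0)"
          have "idc d t D" using D(3,4) unfolding idc_def by (metis Suc_lessI)
          then show "LL d i D" using IH D by blast
        qed
      qed simp
    qed (use C in auto)
  qed
qed

lemma all_LL:
  assumes "1 \<le> d" "A \<in> carrier_mat d d" "invertible_mat A"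
  shows "LL d i (A :: 'm::nontriv mod_ring mat)"
proof -
  obtain B where B: "B \<in> carrier_mat d d" "A * B = 1\<^sub>m d" "B * A = 1\<^sub>m d" using invertible_matD[OF assms(3,2)] .
  have "linv d A" unfolding linv_def using B by blast
  moreover have "idc d (d - 1) A" unfolding idc_def by auto
  ultimately show ?thesis using Q[of "d - 1" d i] assms by auto
qed

lemma Dmat_mult_index:
  assumes "C \<in> carrier_mat d nc" "k < d" "r < d" "j < nc"
  shows "(Dmat d a k * C) $$ (r,j) = (if r = k then a else 1) * C $$ (r,j)"
proof -
  have "(Dmat d a k * C) $$ (r,j) = (\<Sum>t\<in>{0..<d}. Dmat d a k $$ (r,t) * C $$ (t,j))"
    using assms by (simp add: scalar_prod_def)
  also have "\<dots> = (\<Sum>t\<in>{0..<d}. if t = r then (if r = k then a else 1) * C $$ (t,j) else 0)"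
    using assms by (intro sum.cong) (auto simp: Dmat_index algebra_simps)
  also have "\<dots> = (if r = k then a else 1) * C $$ (r,j)"
    using assms by simp
  finally show ?thesis .
qed

lemma Dmat_mult: "k < d \<Longrightarrow> Dmat d a k * Dmat d b k = (Dmat d (a * b) k :: 'a::comm_ring_1 mat)"
  by (rule eq_matI) (auto simp del: index_mult_mat(1) simp add: Dmat_mult_index[OF Dmat_carrier] Dmat_index)

lemma unit_vec_col_carrier[simp]: "unit_vec_col d k \<in> carrier_mat d 1"
  by (simp add: unit_vec_col_def)
lemma unit_vec_col_dims[simp]: "dim_row (unit_vec_col d k) = d" "dim_col (unit_vec_col d k) = 1"
  by (simp_all add: unit_vec_col_def)
lemma unit_vec_col_index: "r < d \<Longrightarrow> c < 1 \<Longrightarrow> unit_vec_col d k $$ (r,c) = (if r = k then 1 else 0)"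
  by (simp add: unit_vec_col_def)

definition TT :: "nat \<Rightarrow> nat \<Rightarrow> 'a::comm_ring_1 mat \<Rightarrow> bool" where
  "TT d i v \<longleftrightarrow> v \<in> carrier_mat d 1 \<and> gAGL (1\<^sub>m d) v \<in> generate (AGL d) (gens d i)"

lemma TT_add:
  assumes "TT d i v" "TT d i w"
  shows "TT d i (w + v)"
proof -
  have v: "v \<in> carrier_mat d 1" and w: "w \<in> carrier_mat d 1" using assms by (auto simp: TT_def)
  have "gAGL (1\<^sub>m d) v * gAGL (1\<^sub>m d) w = gAGL (1\<^sub>m d * 1\<^sub>m d) (1\<^sub>m d * w + v)"
    by (rule gAGL_mult) (use v w in auto)
  also have "\<dots> = gAGL (1\<^sub>m d) (w + v)" using w by simp
  finally have e: "gAGL (1\<^sub>m d) v * gAGL (1\<^sub>m d) w = gAGL (1\<^sub>m d) (w + v)" .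
  have "gAGL (1\<^sub>m d) v \<otimes>\<^bsub>AGL d\<^esub> gAGL (1\<^sub>m d) w \<in> generate (AGL d) (gens d i)"
    using assms unfolding TT_def by (intro generate.eng) auto
  then show ?thesis using e v w unfolding TT_def by (simp add: AGL_def)
qed

lemma TT_zero: "TT d i (0\<^sub>m d 1 :: 'a::comm_ring_1 mat)"
proof -
  have "\<one>\<^bsub>AGL d\<^esub> \<in> generate (AGL d) (gens d i :: 'a mat set)" by (rule generate.one)
  then show ?thesis unfolding TT_def gAGL_one by (simp add: AGL_def)
qed

lemma TT_conj:
  assumes "LL d i A" "LL d i A'" "A * A' = 1\<^sub>m d" "TT d i w"
  shows "TT d i (A * w)"
proof -
  have A: "A \<in> carrier_mat d d" "A' \<in> carrier_mat d d" using assms by (auto simp: LL_def)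
  have w: "w \<in> carrier_mat d 1" using assms by (auto simp: TT_def)
  have "gAGL A (0\<^sub>m d 1) * gAGL (1\<^sub>m d) w = gAGL (A * 1\<^sub>m d) (A * w + 0\<^sub>m d 1)"
    by (rule gAGL_mult) (use A w in auto)
  also have "\<dots> = gAGL A (A * w)" using A w by simp
  finally have e1: "gAGL A (0\<^sub>m d 1) * gAGL (1\<^sub>m d) w = gAGL A (A * w)" .
  have "gAGL A (A * w) * gAGL A' (0\<^sub>m d 1) = gAGL (A * A') (A * 0\<^sub>m d 1 + A * w)"
    by (rule gAGL_mult) (use A w in auto)
  also have "\<dots> = gAGL (1\<^sub>m d) (A * w)" using A w assms(3) by simp
  finally have e2: "gAGL A (A * w) * gAGL A' (0\<^sub>m d 1) = gAGL (1\<^sub>m d) (A * w)" .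
  have "(gAGL A (0\<^sub>m d 1) \<otimes>\<^bsub>AGL d\<^esub> gAGL (1\<^sub>m d) w) \<otimes>\<^bsub>AGL d\<^esub> gAGL A' (0\<^sub>m d 1) \<in> generate (AGL d) (gens d i)"
    using assms unfolding TT_def LL_def by (intro generate.eng) auto
  then show ?thesis using e1 e2 A w unfolding TT_def by (simp add: AGL_def)
qed

lemma TT_ei_nat:
  assumes "i < d"
  shows "TT d i (of_nat N \<cdot>\<^sub>m unit_vec_col d i :: 'a::comm_ring_1 mat)"
proof (induction N)
  case 0
  have "(of_nat 0 :: 'a) \<cdot>\<^sub>m unit_vec_col d i = 0\<^sub>m d 1" by (rule eq_matI) auto
  then show ?case using TT_zero by simp
next
  case (Suc N)
  have TI: "TT d i (unit_vec_col d i :: 'a mat)" unfolding TT_def by (auto intro!: generate.incl simp: gens_def)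
  have "(of_nat (Suc N) :: 'a) \<cdot>\<^sub>m unit_vec_col d i = of_nat N \<cdot>\<^sub>m unit_vec_col d i + unit_vec_col d i"
    by (rule eq_matI) (auto simp: algebra_simps)
  then show ?case using TT_add[OF TI Suc] by simp
qed

lemma TT_ei:
  assumes "i < d"
  shows "TT d i (c \<cdot>\<^sub>m unit_vec_col d i :: 'm::nontriv mod_ring mat)"
  by (subst mod_ring_of_nat[of c]) (rule TT_ei_nat[OF assms])

lemma TT_ek:
  assumes "i < d" "k < d"
  shows "TT d i (c \<cdot>\<^sub>m unit_vec_col d k :: 'm::nontriv mod_ring mat)"
proof (cases "k = i")
  case True then show ?thesis using TT_ei[OF assms(1)] by simp
next
  case False
  have E: "Emat d k i c * Emat d k i (-c) = 1\<^sub>m d" using assms False by (simp add: Emat_add Emat_zero)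
  have "TT d i (Emat d k i c * (1 \<cdot>\<^sub>m unit_vec_col d i))"
    by (rule TT_conj[OF LL_E LL_E E TT_ei]) (use assms False in auto)
  moreover have "Emat d k i c * (1 \<cdot>\<^sub>m unit_vec_col d i) = unit_vec_col d i + c \<cdot>\<^sub>m unit_vec_col d k"
  proof (rule eq_matI)
    fix r j assume rj: "r < dim_row (unit_vec_col d i + c \<cdot>\<^sub>m unit_vec_col d k)" "j < dim_col (unit_vec_col d i + c \<cdot>\<^sub>m unit_vec_col d k)"
    then have r: "r < d" "j = 0" by auto
    have "(Emat d k i c * (1 \<cdot>\<^sub>m unit_vec_col d i)) $$ (r,j)
      = (1 \<cdot>\<^sub>m unit_vec_col d i) $$ (r,0) + (if r = k then c * (1 \<cdot>\<^sub>m unit_vec_col d i) $$ (i,0) else 0)"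
      unfolding r(2) by (rule Emat_mult_index[where nc=1]) (use assms r in auto)
    then show "(Emat d k i c * (1 \<cdot>\<^sub>m unit_vec_col d i)) $$ (r,j) = (unit_vec_col d i + c \<cdot>\<^sub>m unit_vec_col d k) $$ (r,j)"
      using assms r False by (auto simp: unit_vec_col_index)
  qed auto
  ultimately have "TT d i ((-1) \<cdot>\<^sub>m unit_vec_col d i + (unit_vec_col d i + c \<cdot>\<^sub>m unit_vec_col d k))"
    using TT_add TT_ei[OF assms(1)] by metis
  moreover have "(-1) \<cdot>\<^sub>m unit_vec_col d i + (unit_vec_col d i + c \<cdot>\<^sub>m unit_vec_col d k) = c \<cdot>\<^sub>m unit_vec_col d k"
    by (rule eq_matI) auto
  ultimately show ?thesis by simp
qed

lemma TT_all:
  assumes "i < d" "v \<in> carrier_mat d 1"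
  shows "TT d i (v :: 'm::nontriv mod_ring mat)"
proof -
  define tr where "tr N = mat d 1 (\<lambda>(r,c). if r < N then v $$ (r,0) else 0)" for N
  have "TT d i (tr N)" if "N \<le> d" for N
    using that
  proof (induction N)
    case 0
    have "tr 0 = 0\<^sub>m d 1" unfolding tr_def by (rule eq_matI) auto
    then show ?case using TT_zero by simp
  next
    case (Suc N)
    have "tr (Suc N) = v $$ (N,0) \<cdot>\<^sub>m unit_vec_col d N + tr N"
      unfolding tr_def by (rule eq_matI) (auto simp: unit_vec_col_index less_Suc_eq)
    then show ?case using TT_add[OF Suc(1) TT_ek[OF assms(1)]] Suc(2) by simp
  qed
  moreover have "tr d = v" unfolding tr_def by (rule eq_matI) (use assms in auto)
  ultimately show ?thesis by auto
qed

lemma main: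
  assumes "1 \<le> d" "i < d"
  shows "generate (AGL d :: 'm::nontriv mod_ring mat monoid) (gens d i) = carrier (AGL d)"
proof
  interpret G: group "AGL d :: 'm mod_ring mat monoid" by (rule AGL_group)
  have C: "carrier (AGL d :: 'm mod_ring mat monoid) = AGL_carrier d" by (simp add: AGL_def)
  have gc: "gens d i \<subseteq> carrier (AGL d :: 'm mod_ring mat monoid)"
  proof
    fix x :: "'m mod_ring mat" assume "x \<in> gens d i"
    then consider "x = gAGL (1\<^sub>m d) (unit_vec_col d i)"
      | k l where "x = gAGL (Emat d k l 1) (0\<^sub>m d 1)" "k < d" "l < d" "k \<noteq> l"
      | \<alpha> where "x = gAGL (Dmat d \<alpha> 0) (0\<^sub>m d 1)" "\<alpha> dvd 1"
      unfolding gens_def by blast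
    then show "x \<in> carrier (AGL d)"
    proof cases
      case 1
      have "invertible_mat (1\<^sub>m d :: 'm mod_ring mat)" by (rule invertible_matI[of _ d "1\<^sub>m d"]) auto
      then show ?thesis using 1 unfolding C AGL_carrier_def by fastforce
    next
      case (2 k l)
      have "invertible_mat (Emat d k l 1 :: 'm mod_ring mat)"
        by (rule invertible_matI[of _ d "Emat d k l (-1)"]) (use 2 in \<open>auto simp: Emat_add Emat_zero\<close>)
      then show ?thesis using 2 unfolding C AGL_carrier_def by fastforce
    next
      case (3 \<alpha>)
      obtain w where w: "1 = \<alpha> * w" using 3(2) by (auto elim: dvdE)
      have "invertible_mat (Dmat d \<alpha> 0 :: 'm mod_ring mat)"
      proof (rule invertible_matI[of _ d "Dmat d w 0"])
        have "Dmat d 1 0 = (1\<^sub>m d :: 'm mod_ring mat)" by (rule eq_matI) (auto simp: Dmat_index)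
        then show "Dmat d \<alpha> 0 * Dmat d w 0 = 1\<^sub>m d" "Dmat d w 0 * Dmat d \<alpha> 0 = 1\<^sub>m d"
          using assms w Dmat_mult[of 0 d \<alpha> w] Dmat_mult[of 0 d w \<alpha>] by (auto simp: mult.commute)
      qed auto
      then show ?thesis using 3 unfolding C AGL_carrier_def by fastforce
    qed
  qed
  show "generate (AGL d) (gens d i) \<subseteq> carrier (AGL d :: 'm mod_ring mat monoid)"
    by (rule G.generate_incl[OF gc])
  show "carrier (AGL d) \<subseteq> generate (AGL d) (gens d i :: 'm mod_ring mat set)"
  proof
    fix x :: "'m mod_ring mat" assume "x \<in> carrier (AGL d)"
    then obtain A v where x: "x = gAGL A v" "A \<in> carrier_mat d d" "invertible_mat A" "v \<in> carrier_mat d 1"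
      unfolding C AGL_carrier_def by blast
    have L: "LL d i A" by (rule all_LL[OF assms(1) x(2,3)])
    have T: "TT d i v" by (rule TT_all[OF assms(2) x(4)])
    have "gAGL (1\<^sub>m d) v * gAGL A (0\<^sub>m d 1) = gAGL (1\<^sub>m d * A) (1\<^sub>m d * 0\<^sub>m d 1 + v)"
      by (rule gAGL_mult) (use x in auto)
    also have "\<dots> = x" using x by simp
    finally have e: "gAGL (1\<^sub>m d) v * gAGL A (0\<^sub>m d 1) = x" .
    have "gAGL (1\<^sub>m d) v \<otimes>\<^bsub>AGL d\<^esub> gAGL A (0\<^sub>m d 1) \<in> generate (AGL d) (gens d i)"
      using L T unfolding LL_def TT_def by (intro generate.eng) auto
    then show "x \<in> generate (AGL d) (gens d i)" using e by (simp add: AGL_def)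
  qed
qed

theorem lemma3p6:
  fixes n i :: nat
  assumes "n \<ge> 2" and "i < n - 1"
  shows "generate (AGL (n - 1) :: 'm::nontriv mod_ring mat monoid)
           ({gAGL (1\<^sub>m (n - 1)) (unit_vec_col (n - 1) i)}
            \<union> {gAGL (Emat (n - 1) k l 1) (0\<^sub>m (n - 1) 1) | k l. k < n - 1 \<and> l < n - 1 \<and> k \<noteq> l}
            \<union> {gAGL (Dmat (n - 1) \<alpha> 0) (0\<^sub>m (n - 1) 1) | \<alpha>. \<alpha> dvd 1})
         = carrier (AGL (n - 1) :: 'm::nontriv mod_ring mat monoid)"
  using main[of "n - 1" i] assms unfolding gens_def by simp
end
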